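(* Let $n\ge1$, put $L=2^n$ and $M=2^{n-1}$, and let $g={}_5h_n$. Define the words \begin{align*} {}_6h_{n+1}&=\delta_f(g)\,u\,\overline{\delta_m(g)}\,r\,g\,d\,\overline{\delta_y(g)},\\ {}_7h_{n+1}&=\delta_f(g)\,u\,\overline{\delta_m(g)}\,r\,g\,d\,\delta_a(g),\\ {}_8h_{n+1}&=\overline{\delta_g(g)}\,u\,\overline{\delta_m(g)}\,r\,g\,d\,\delta_a(g),\\ {}_9h_{n+1}&=\overline{\delta_o(g)}\,u\,\delta_g(g)\,r\,\overline{\delta_a(g)}\,d\,\delta_x(g),\\ {}_{10}h_{n+1}&=\delta_m(g)\,u\,\delta_g(g)\,r\,\overline{\delta_a(g)}\,d\,\overline{g},\\ {}_{11}h_{n+1}&=\delta_m(g)\,u\,\delta_g(g)\,r\,\overline{\delta_a(g)}\,d\,\delta_x(g). \end{align*} Then each of these words traces a Hamiltonian path of the grid $\{0,\dots,2L-1\}^2$, with the following endpoints: \begin{enumerate} \item ${}_6h_{n+1}$ goes from $(L-1,M)$ to $(L,M)$; the endpoints are adjacent. \item ${}_7h_{n+1}$ goes from $(L-1,M)$ to $(2L-1,M-1)$. \item ${}_8h_{n+1}$ goes from $(0,M-1)$ to $(2L-1,M-1)$. \item ${}_9h_{n+1}$ goes from $(L-1,M-1)$ to $(L,M-1)$; the endpoints are adjacent. \item ${}_{10}h_{n+1}$ goes from $(0,M)$ to $(2L-1,M)$. \item ${}_{11}h_{n+1}$ goes from $(0,M)$ to $(L,M-1)$. \end{enumerate}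
   Context: Let $\Sigma=\{u,d,r,l\}$, where $u$ = up, $d$ = down, $r$ = right and $l$ = left. Set $v(u)=(0,1)$, $v(d)=(0,-1)$, $v(r)=(1,0)$ and $v(l)=(-1,0)$. For a finite word $w=w_1\cdots w_k$ over $\Sigma$ and a point $p\in\mathbb{Z}^2$, the lattice path encoded by $w$ from $p$ is the sequence $p_0=p$, $p_i=p_{i-1}+v(w_i)$ for $i=1,\dots,k$. For $m\ge 1$, say that $w$ traces a Hamiltonian path of the grid $\{0,\dots,m-1\}^2$ from $a$ to $b$ if the path encoded by $w$ from $a$ satisfies three conditions: the points $p_0,\dots,p_k$ are pairwise distinct; $\{p_0,\dots,p_k\}=\{0,\dots,m-1\}^2$, so that $k=m^2-1$; and $p_k=b$. Grid points represent the $m^2$ equal subsquares of the unit square, and consecutive points are edge-adjacent squares. Juxtaposition denotes concatenation of words. The reversion operation is $\overline{w_1w_2\cdots w_k}=w_k\cdots w_2w_1$: the order of the letters is reversed and no letter is substituted. The following letter-to-letter morphisms of $\Sigma^*$ are applied letterwise: \begin{itemize} \item $\delta_o$: $u\mapsto r$, $r\mapsto u$, $d\mapsto l$, $l\mapsto d$; \item $\delta_a$: $u\mapsto l$, $r\mapsto d$, $d\mapsto r$, $l\mapsto u$; \item $\delta_g$: $u\mapsto l$, $r\mapsto u$, $d\mapsto r$, $l\mapsto d$; \item $\delta_x$: $u\mapsto r$, $r\mapsto d$, $d\mapsto l$, $l\mapsto u$; \item $\delta_f$: $u\mapsto d$, $r\mapsto l$, $d\mapsto u$, $l\mapsto r$;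 \item $\delta_m$: $u\mapsto d$, $r\mapsto r$, $d\mapsto u$, $l\mapsto l$; \item $\delta_y$: $u\mapsto u$, $r\mapsto l$, $d\mapsto d$, $l\mapsto r$. \end{itemize} The Hilbert words are defined recursively by ${}_0h_0=\varepsilon$ (the empty word) and \[ {}_0h_{n+1}=\delta_o({}_0h_n)\,u\,{}_0h_n\,r\,{}_0h_n\,d\,\delta_a({}_0h_n). \] For $n\ge1$, put $h={}_0h_{n-1}$ and define \[ {}_5h_n=\delta_m(h)\,u\,\delta_g(h)\,r\,\delta_x(h)\,d\,\delta_x(h). \] *)

theory Defs
  imports Main
begin

datatype letter = U | D | R | L

fun vec :: "letter \<Rightarrow> int \<times> int" where
  "vec U = (0, 1)" | "vec D = (0, -1)" | "vec R = (1, 0)" | "vec L = (-1, 0)"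

fun path :: "int \<times> int \<Rightarrow> letter list \<Rightarrow> (int \<times> int) list" where
  "path p [] = [p]"
| "path p (c # w) = p # path (fst p + fst (vec c), snd p + snd (vec c)) w"

definition grid :: "nat \<Rightarrow> (int \<times> int) set" where
  "grid m = {0..int m - 1} \<times> {0..int m - 1}"

definition traces_ham :: "letter list \<Rightarrow> nat \<Rightarrow> int \<times> int \<Rightarrow> int \<times> int \<Rightarrow> bool" where
  "traces_ham w m a b \<longleftrightarrow>
     distinct (path a w) \<and> set (path a w) = grid m \<and> last (path a w) = b"

fun d_o :: "letter \<Rightarrow> letter" where
  "d_o U = R" | "d_o R = U" | "d_o D = L" | "d_o L = D"
fun d_a :: "letter \<Rightarrow> letter" where
  "d_a U = L" | "d_a R = D" | "d_a D = R" | "d_a L = U"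
fun d_g :: "letter \<Rightarrow> letter" where
  "d_g U = L" | "d_g R = U" | "d_g D = R" | "d_g L = D"
fun d_x :: "letter \<Rightarrow> letter" where
  "d_x U = R" | "d_x R = D" | "d_x D = L" | "d_x L = U"
fun d_f :: "letter \<Rightarrow> letter" where
  "d_f U = D" | "d_f R = L" | "d_f D = U" | "d_f L = R"
fun d_m :: "letter \<Rightarrow> letter" where
  "d_m U = D" | "d_m R = R" | "d_m D = U" | "d_m L = L"
fun d_y :: "letter \<Rightarrow> letter" where
  "d_y U = U" | "d_y R = L" | "d_y D = D" | "d_y L = R"

fun h0 :: "nat \<Rightarrow> letter list" where
  "h0 0 = []"
| "h0 (Suc n) = map d_o (h0 n) @ [U] @ h0 n @ [R] @ h0 n @ [D] @ map d_a (h0 n)"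

definition h5 :: "nat \<Rightarrow> letter list" where
  "h5 n = (let h = h0 (n - 1) in
     map d_m h @ [U] @ map d_g h @ [R] @ map d_x h @ [D] @ map d_x h)"

definition h6 :: "nat \<Rightarrow> letter list" where
  "h6 n = (let g = h5 n in
     map d_f g @ [U] @ rev (map d_m g) @ [R] @ g @ [D] @ rev (map d_y g))"
definition h7 :: "nat \<Rightarrow> letter list" where
  "h7 n = (let g = h5 n in
     map d_f g @ [U] @ rev (map d_m g) @ [R] @ g @ [D] @ map d_a g)"
definition h8 :: "nat \<Rightarrow> letter list" where
  "h8 n = (let g = h5 n in
     rev (map d_g g) @ [U] @ rev (map d_m g) @ [R] @ g @ [D] @ map d_a g)"
definition h9 :: "nat \<Rightarrow> letter list" where
  "h9 n = (let g = h5 n in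
     rev (map d_o g) @ [U] @ map d_g g @ [R] @ rev (map d_a g) @ [D] @ map d_x g)"
definition h10 :: "nat \<Rightarrow> letter list" where
  "h10 n = (let g = h5 n in
     map d_m g @ [U] @ map d_g g @ [R] @ rev (map d_a g) @ [D] @ rev g)"
definition h11 :: "nat \<Rightarrow> letter list" where
  "h11 n = (let g = h5 n in
     map d_m g @ [U] @ map d_g g @ [R] @ rev (map d_a g) @ [D] @ map d_x g)"

definition adjacent :: "int \<times> int \<Rightarrow> int \<times> int \<Rightarrow> bool" where
  "adjacent p q \<longleftrightarrow> \<bar>fst p - fst q\<bar> + \<bar>snd p - snd q\<bar> = 1"

end

theory Submission
  imports Defs
begin


definition mv :: "int \<times> int \<Rightarrow> letter \<Rightarrow> int \<times> int" where
  "mv p c = (fst p + fst (vec c), snd p + snd (vec c))"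

lemma path_Cons: "path p (c # w) = p # path (mv p c) w"
  by (simp add: mv_def)

declare path.simps(2)[simp del]

lemma path_ne: "path p w \<noteq> []"
  by (induction w arbitrary: p) (auto simp: path_Cons)

lemma path_hd: "hd (path p w) = p"
  by (cases w) (auto simp: path_Cons)

lemma path_append: "path p (w1 @ c # w2) = path p w1 @ path (mv (last (path p w1)) c) w2"
  by (induction w1 arbitrary: p) (auto simp: path_Cons path_ne)

lemma path_map:
  assumes "\<And>c p. T (mv p c) = mv (T p) (dd c)"
  shows "path (T p) (map dd w) = map T (path p w)"
proof (induction w arbitrary: p)
  case (Cons c w) show ?case by (simp add: path_Cons Cons.IH flip: assms)
qed simp

lemma map_ham:
  assumes h: "traces_ham w m a b"
  and hv: "\<And>c p. T (mv p c) = mv (T p) (dd c)"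
  and t: "\<And>p. p \<in> grid m \<Longrightarrow> T p \<in> grid m"
  and s: "\<And>p. p \<in> grid m \<Longrightarrow> S p \<in> grid m"
  and ts: "\<And>p. p \<in> grid m \<Longrightarrow> T (S p) = p"
  and st: "\<And>p. p \<in> grid m \<Longrightarrow> S (T p) = p"
  shows "traces_ham (map dd w) m (T a) (T b)"
proof -
  have P: "path (T a) (map dd w) = map T (path a w)" using path_map[OF hv] .
  have g: "set (path a w) = grid m" and d: "distinct (path a w)" and l: "last (path a w) = b"
    using h by (auto simp: traces_ham_def)
  have inj: "inj_on T (grid m)" by (metis inj_onI st)
  have im: "T ` grid m = grid m"
  proof
    show "T ` grid m \<subseteq> grid m" using t by auto
    show "grid m \<subseteq> T ` grid m"
    proof
      fix p assume "p \<in> grid m"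
      then show "p \<in> T ` grid m" using s ts by (metis image_eqI)
    qed
  qed
  show ?thesis unfolding traces_ham_def P
    using d g l inj im path_ne
    by (auto simp: distinct_map last_map inj_on_subset)
qed

lemma path_snoc: "path p (w @ [c]) = path p w @ [mv (last (path p w)) c]"
  using path_append[of p w c "[]"] by simp

lemma path_rev:
  "last (path a w) = b \<Longrightarrow> path b (rev (map d_f w)) = rev (path a w)"
proof (induction w arbitrary: a)
  case Nil then show ?case by simp
next
  case (Cons c w)
  have l: "last (path (mv a c) w) = b" using Cons.prems by (simp add: path_Cons path_ne)
  have "path b (rev (map d_f (c # w))) = path b (rev (map d_f w) @ [d_f c])" by simp
  also have "\<dots> = rev (path (mv a c) w) @ [mv (last (rev (path (mv a c) w))) (d_f c)]"
    by (simp add: path_snoc Cons.IH[OF l])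
  also have "last (rev (path (mv a c) w)) = mv a c"
    by (simp add: last_rev path_hd)
  also have "mv (mv a c) (d_f c) = a" by (cases c) (auto simp: mv_def)
  finally show ?case by (simp add: path_Cons)
qed

lemma rev_ham:
  assumes "traces_ham w m a b" shows "traces_ham (rev (map d_f w)) m b a"
proof -
  have l: "last (path a w) = b" using assms by (simp add: traces_ham_def)
  show ?thesis using assms unfolding traces_ham_def path_rev[OF l]
    by (simp add: last_rev path_hd)
qed



lemma sym_gen:
  assumes h: "traces_ham w m a b"
  and hv: "\<And>c x y. T (mv (x,y) c) = mv (T (x,y)) (dd c)"
  and t: "\<And>x y. (x,y) \<in> grid m \<Longrightarrow> T (x,y) \<in> grid m"
  and inv: "\<And>x y. (x,y) \<in> grid m \<Longrightarrow> T (T (x,y)) = (x,y)"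
  shows "traces_ham (map dd w) m (T a) (T b)"
  by (rule map_ham[OF h, where S=T]) (use hv t inv in auto)

lemma sym_gen2:
  assumes h: "traces_ham w m a b"
  and hv: "\<And>c x y. T (mv (x,y) c) = mv (T (x,y)) (dd c)"
  and t: "\<And>x y. (x,y) \<in> grid m \<Longrightarrow> T (x,y) \<in> grid m"
  and s: "\<And>x y. (x,y) \<in> grid m \<Longrightarrow> S (x,y) \<in> grid m"
  and ts: "\<And>x y. (x,y) \<in> grid m \<Longrightarrow> T (S (x,y)) = (x,y)"
  and st: "\<And>x y. (x,y) \<in> grid m \<Longrightarrow> S (T (x,y)) = (x,y)"
  shows "traces_ham (map dd w) m (T a) (T b)"
  by (rule map_ham[OF h, where S=S]) (use hv t s ts st in auto)

lemma ham_m: "traces_ham w m (x1,y1) (x2,y2) \<Longrightarrow>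
  traces_ham (map d_m w) m (x1, (int m - 1)-y1) (x2, (int m - 1)-y2)"
proof -
  assume h: "traces_ham w m (x1,y1) (x2,y2)"
  have hv: "\<And>c x y. (\<lambda>(x,y). (x, (int m - 1)-y)) (mv (x,y) c) = mv ((\<lambda>(x,y). (x, (int m - 1)-y)) (x,y)) (d_m c)"
    subgoal for c by (cases c) (auto simp: mv_def)
    done
  have "traces_ham (map d_m w) m ((\<lambda>(x,y). (x, (int m - 1)-y)) (x1,y1)) ((\<lambda>(x,y). (x, (int m - 1)-y)) (x2,y2))"
    by (rule sym_gen[OF h hv]) (auto simp: grid_def)
  then show ?thesis by simp
qed

lemma ham_y: "traces_ham w m (x1,y1) (x2,y2) \<Longrightarrow>
  traces_ham (map d_y w) m ((int m - 1)-x1, y1) ((int m - 1)-x2, y2)"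
proof -
  assume h: "traces_ham w m (x1,y1) (x2,y2)"
  have hv: "\<And>c x y. (\<lambda>(x,y). ((int m - 1)-x, y)) (mv (x,y) c) = mv ((\<lambda>(x,y). ((int m - 1)-x, y)) (x,y)) (d_y c)"
    subgoal for c by (cases c) (auto simp: mv_def)
    done
  have "traces_ham (map d_y w) m ((\<lambda>(x,y). ((int m - 1)-x, y)) (x1,y1)) ((\<lambda>(x,y). ((int m - 1)-x, y)) (x2,y2))"
    by (rule sym_gen[OF h hv]) (auto simp: grid_def)
  then show ?thesis by simp
qed

lemma ham_f: "traces_ham w m (x1,y1) (x2,y2) \<Longrightarrow>
  traces_ham (map d_f w) m ((int m - 1)-x1, (int m - 1)-y1) ((int m - 1)-x2, (int m - 1)-y2)"
proof -
  assume h: "traces_ham w m (x1,y1) (x2,y2)"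
  have hv: "\<And>c x y. (\<lambda>(x,y). ((int m - 1)-x, (int m - 1)-y)) (mv (x,y) c) = mv ((\<lambda>(x,y). ((int m - 1)-x, (int m - 1)-y)) (x,y)) (d_f c)"
    subgoal for c by (cases c) (auto simp: mv_def)
    done
  have "traces_ham (map d_f w) m ((\<lambda>(x,y). ((int m - 1)-x, (int m - 1)-y)) (x1,y1)) ((\<lambda>(x,y). ((int m - 1)-x, (int m - 1)-y)) (x2,y2))"
    by (rule sym_gen[OF h hv]) (auto simp: grid_def)
  then show ?thesis by simp
qed

lemma ham_o: "traces_ham w m (x1,y1) (x2,y2) \<Longrightarrow>
  traces_ham (map d_o w) m (y1, x1) (y2, x2)"
proof -
  assume h: "traces_ham w m (x1,y1) (x2,y2)"
  have hv: "\<And>c x y. (\<lambda>(x,y). (y, x)) (mv (x,y) c) = mv ((\<lambda>(x,y). (y, x)) (x,y)) (d_o c)"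
    subgoal for c by (cases c) (auto simp: mv_def)
    done
  have "traces_ham (map d_o w) m ((\<lambda>(x,y). (y, x)) (x1,y1)) ((\<lambda>(x,y). (y, x)) (x2,y2))"
    by (rule sym_gen[OF h hv]) (auto simp: grid_def)
  then show ?thesis by simp
qed

lemma ham_a: "traces_ham w m (x1,y1) (x2,y2) \<Longrightarrow>
  traces_ham (map d_a w) m ((int m - 1)-y1, (int m - 1)-x1) ((int m - 1)-y2, (int m - 1)-x2)"
proof -
  assume h: "traces_ham w m (x1,y1) (x2,y2)"
  have hv: "\<And>c x y. (\<lambda>(x,y). ((int m - 1)-y, (int m - 1)-x)) (mv (x,y) c) = mv ((\<lambda>(x,y). ((int m - 1)-y, (int m - 1)-x)) (x,y)) (d_a c)"
    subgoal for c by (cases c) (auto simp: mv_def)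
    done
  have "traces_ham (map d_a w) m ((\<lambda>(x,y). ((int m - 1)-y, (int m - 1)-x)) (x1,y1)) ((\<lambda>(x,y). ((int m - 1)-y, (int m - 1)-x)) (x2,y2))"
    by (rule sym_gen[OF h hv]) (auto simp: grid_def)
  then show ?thesis by simp
qed

lemma ham_g: "traces_ham w m (x1,y1) (x2,y2) \<Longrightarrow>
  traces_ham (map d_g w) m ((int m - 1)-y1, x1) ((int m - 1)-y2, x2)"
proof -
  assume h: "traces_ham w m (x1,y1) (x2,y2)"
  have hv: "\<And>c x y. (\<lambda>(x,y). ((int m - 1)-y, x)) (mv (x,y) c) = mv ((\<lambda>(x,y). ((int m - 1)-y, x)) (x,y)) (d_g c)"
    subgoal for c by (cases c) (auto simp: mv_def)
    done
  have "traces_ham (map d_g w) m ((\<lambda>(x,y). ((int m - 1)-y, x)) (x1,y1)) ((\<lambda>(x,y). ((int m - 1)-y, x)) (x2,y2))"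
    by (rule sym_gen2[OF h hv, where S="(\<lambda>(x,y). (y, (int m - 1)-x))"]) (auto simp: grid_def)
  then show ?thesis by simp
qed

lemma ham_x: "traces_ham w m (x1,y1) (x2,y2) \<Longrightarrow>
  traces_ham (map d_x w) m (y1, (int m - 1)-x1) (y2, (int m - 1)-x2)"
proof -
  assume h: "traces_ham w m (x1,y1) (x2,y2)"
  have hv: "\<And>c x y. (\<lambda>(x,y). (y, (int m - 1)-x)) (mv (x,y) c) = mv ((\<lambda>(x,y). (y, (int m - 1)-x)) (x,y)) (d_x c)"
    subgoal for c by (cases c) (auto simp: mv_def)
    done
  have "traces_ham (map d_x w) m ((\<lambda>(x,y). (y, (int m - 1)-x)) (x1,y1)) ((\<lambda>(x,y). (y, (int m - 1)-x)) (x2,y2))"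
    by (rule sym_gen2[OF h hv, where S="(\<lambda>(x,y). ((int m - 1)-y, x))"]) (auto simp: grid_def)
  then show ?thesis by simp
qed



lemma path_shift: "path (x + s, y + t) w = map (\<lambda>(a,b). (a + s, b + t)) (path (x,y) w)"
proof -
  have "path ((\<lambda>(a,b). (a + s, b + t)) (x,y)) (map id w) = map (\<lambda>(a,b). (a + s, b + t)) (path (x,y) w)"
    by (rule path_map) (auto simp: mv_def)
  then show ?thesis by simp
qed

lemma shift_grid: "(\<lambda>(a,b). (a + s, b + t)) ` grid m = {s..s + int m - 1} \<times> {t..t + int m - 1}"
proof -
  have "(\<lambda>(a,b). (a + s, b + t)) ` grid m \<subseteq> {s..s + int m - 1} \<times> {t..t + int m - 1}"
    by (auto simp: grid_def)
  moreover have "{s..s + int m - 1} \<times> {t..t + int m - 1} \<subseteq> (\<lambda>(a,b). (a + s, b + t)) ` grid m"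
  proof
    fix p assume "p \<in> {s..s + int m - 1} \<times> {t..t + int m - 1}"
    then obtain a b where p: "p = (a,b)" "a \<in> {s..s + int m - 1}" "b \<in> {t..t + int m - 1}" by auto
    then have "(a - s, b - t) \<in> grid m" by (auto simp: grid_def)
    moreover have "p = (\<lambda>(a,b). (a + s, b + t)) (a - s, b - t)" using p by simp
    ultimately show "p \<in> (\<lambda>(a,b). (a + s, b + t)) ` grid m" by blast
  qed
  ultimately show ?thesis by blast
qed

lemma shift_ham:
  assumes "traces_ham w m (x1,y1) (x2,y2)"
  shows "distinct (path (x1 + s, y1 + t) w)"
    "set (path (x1 + s, y1 + t) w) = {s..s + int m - 1} \<times> {t..t + int m - 1}"
    "last (path (x1 + s, y1 + t) w) = (x2 + s, y2 + t)"
proof -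
  have inj: "inj (\<lambda>(a::int,b::int). (a + s, b + t))" by (auto simp: inj_def)
  show "distinct (path (x1 + s, y1 + t) w)" using assms
    by (simp add: path_shift traces_ham_def distinct_map inj_on_subset[OF inj])
  show "set (path (x1 + s, y1 + t) w) = {s..s + int m - 1} \<times> {t..t + int m - 1}" using assms
    by (simp add: path_shift traces_ham_def shift_grid del: image_split_eq_Sigma)
  show "last (path (x1 + s, y1 + t) w) = (x2 + s, y2 + t)" using assms
    by (simp add: path_shift traces_ham_def last_map path_ne)
qed

lemma quad:
  assumes h1: "traces_ham w1 m (a1x,a1y) (b1x, int m - 1)"
  and h2: "traces_ham w2 m (b1x, 0) (int m - 1, b2y)"
  and h3: "traces_ham w3 m (0, b2y) (b3x, 0)"
  and h4: "traces_ham w4 m (b3x, int m - 1) (b4x, b4y)"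
  shows "traces_ham (w1 @ [U] @ w2 @ [R] @ w3 @ [D] @ w4) (2*m) (a1x,a1y) (b4x + int m, b4y)"
proof -
  define k where "k = int m - 1"
  have A1: "distinct (path (a1x,a1y) w1)" "set (path (a1x,a1y) w1) = {0..k} \<times> {0..k}"
      "last (path (a1x,a1y) w1) = (b1x, k)"
    using shift_ham[OF h1, of 0 0] by (simp_all add: k_def)
  have e2: "mv (b1x, k) U = (b1x + 0, 0 + int m)" by (simp add: mv_def k_def)
  have A2: "distinct (path (b1x + 0, 0 + int m) w2)" "set (path (b1x + 0, 0 + int m) w2) = {0..k} \<times> {int m..int m + k}"
      "last (path (b1x + 0, 0 + int m) w2) = (k, b2y + int m)"
    using shift_ham[OF h2, of 0 "int m"] by (simp_all add: k_def)
  have e3: "mv (k, b2y + int m) R = (0 + int m, b2y + int m)" by (simp add: mv_def k_def)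
  have A3: "distinct (path (0 + int m, b2y + int m) w3)" "set (path (0 + int m, b2y + int m) w3) = {int m..int m + k} \<times> {int m..int m + k}"
      "last (path (0 + int m, b2y + int m) w3) = (b3x + int m, int m)"
    using shift_ham[OF h3, of "int m" "int m"] by (simp_all add: k_def)
  have e4: "mv (b3x + int m, int m) D = (b3x + int m, k + 0)" by (simp add: mv_def k_def)
  have A4: "distinct (path (b3x + int m, k + 0) w4)" "set (path (b3x + int m, k + 0) w4) = {int m..int m + k} \<times> {0..k}"
      "last (path (b3x + int m, k + 0) w4) = (b4x + int m, b4y)"
    using shift_ham[OF h4, of "int m" 0] by (simp_all add: k_def)
  have P: "path (a1x,a1y) (w1 @ [U] @ w2 @ [R] @ w3 @ [D] @ w4) =
     path (a1x,a1y) w1 @ path (b1x + 0, 0 + int m) w2 @ path (0 + int m, b2y + int m) w3 @ path (b3x + int m, k + 0) w4"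
    using A1(3) A2(3) A3(3) e2 e3 e4 by (simp add: path_append)
  have G: "grid (2*m) = {0..k} \<times> {0..k} \<union> ({0..k} \<times> {int m..int m + k} \<union> ({int m..int m + k} \<times> {int m..int m + k} \<union> {int m..int m + k} \<times> {0..k}))"
    unfolding grid_def k_def by auto
  show ?thesis unfolding traces_ham_def P
    using A1 A2 A3 A4 G path_ne by (auto simp: k_def)
qed



lemma h0_ham: "traces_ham (h0 n) (2^n) (0,0) (int (2^n) - 1, 0)"
proof (induction n)
  case 0 then show ?case by (auto simp: traces_ham_def grid_def)
next
  case (Suc n)
  define m :: nat where "m = 2^n"
  have IH: "traces_ham (h0 n) m (0,0) (int m - 1, 0)" using Suc m_def by simp
  have q1: "traces_ham (map d_o (h0 n)) m (0,0) (0, int m - 1)" using ham_o[OF IH] by simp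
  have q4: "traces_ham (map d_a (h0 n)) m (int m - 1, int m - 1) (int m - 1, 0)" using ham_a[OF IH] by simp
  have "traces_ham (h0 (Suc n)) (2*m) (0,0) (int m - 1 + int m, 0)"
    using quad[OF q1 IH IH q4] by simp
  then show ?case by (simp add: m_def)
qed

lemma h5_ham:
  assumes "n \<ge> 1"
  shows "traces_ham (h5 n) (2 * 2^(n-1)) (0, int (2^(n-1)) - 1) (int (2^(n-1)), 0)"
proof -
  define m :: nat where "m = 2^(n-1)"
  have h: "traces_ham (h0 (n-1)) m (0,0) (int m - 1, 0)" using h0_ham m_def by simp
  have q1: "traces_ham (map d_m (h0 (n-1))) m (0, int m - 1) (int m - 1, int m - 1)" using ham_m[OF h] by simp
  have q2: "traces_ham (map d_g (h0 (n-1))) m (int m - 1, 0) (int m - 1, int m - 1)" using ham_g[OF h] by simp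
  have q3: "traces_ham (map d_x (h0 (n-1))) m (0, int m - 1) (0, 0)" using ham_x[OF h] by simp
  have "traces_ham (h5 n) (2*m) (0, int m - 1) (0 + int m, 0)"
    unfolding h5_def Let_def using quad[OF q1 q2 q3 q3] by simp
  then show ?thesis by (simp add: m_def)
qed



lemma comp_eqs: "d_m = d_f \<circ> d_y" "d_y = d_f \<circ> d_m" "d_g = d_f \<circ> d_x" "d_o = d_f \<circ> d_a"
   "d_a = d_f \<circ> d_o" "id = d_f \<circ> d_f"
  by (auto intro!: ext) (case_tac x; simp)+

lemma rev_eqs: "rev (map d_m w) = rev (map d_f (map d_y w))" "rev (map d_y w) = rev (map d_f (map d_m w))"
  "rev (map d_g w) = rev (map d_f (map d_x w))" "rev (map d_o w) = rev (map d_f (map d_a w))"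
  "rev (map d_a w) = rev (map d_f (map d_o w))" "rev w = rev (map d_f (map d_f w))"
  by (simp_all add: map_map flip: comp_eqs)

theorem mainTheorem2:
  fixes n :: nat
  assumes "n \<ge> 1"
  defines "Lg \<equiv> (2::int) ^ n" and "Mg \<equiv> (2::int) ^ (n - 1)"
  shows "traces_ham (h6 n) (2 * 2 ^ n) (Lg - 1, Mg) (Lg, Mg) \<and> adjacent (Lg - 1, Mg) (Lg, Mg)
    \<and> traces_ham (h7 n) (2 * 2 ^ n) (Lg - 1, Mg) (2 * Lg - 1, Mg - 1)
    \<and> traces_ham (h8 n) (2 * 2 ^ n) (0, Mg - 1) (2 * Lg - 1, Mg - 1)
    \<and> traces_ham (h9 n) (2 * 2 ^ n) (Lg - 1, Mg - 1) (Lg, Mg - 1) \<and> adjacent (Lg - 1, Mg - 1) (Lg, Mg - 1)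
    \<and> traces_ham (h10 n) (2 * 2 ^ n) (0, Mg) (2 * Lg - 1, Mg)
    \<and> traces_ham (h11 n) (2 * 2 ^ n) (0, Mg) (Lg, Mg - 1)"
proof -
  define M :: nat where "M = 2^(n-1)"
  define N :: nat where "N = 2*M"
  have nN: "2^n = N" unfolding N_def M_def using assms(1)
    by (metis Suc_diff_le diff_Suc_1 power_Suc)
  have NM: "int N = 2 * int M" by (simp add: N_def)
  have LgN: "Lg = int N" unfolding Lg_def by (simp flip: nN)
  have MgM: "Mg = int M" unfolding Mg_def M_def by simp
  define g where "g = h5 n"
  have hg: "traces_ham g N (0, int M - 1) (int M, 0)"
    using h5_ham[OF assms(1)] by (simp add: g_def N_def M_def)
  have pm: "traces_ham (map d_m g) N (0, int M) (int M, int N - 1)" using ham_m[OF hg] by (simp add: NM)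
  have py: "traces_ham (map d_y g) N (int N - 1, int M - 1) (int M - 1, 0)" using ham_y[OF hg] by (simp add: NM)
  have pf: "traces_ham (map d_f g) N (int N - 1, int M) (int M - 1, int N - 1)" using ham_f[OF hg] by (simp add: NM)
  have po: "traces_ham (map d_o g) N (int M - 1, 0) (0, int M)" using ham_o[OF hg] by (simp add: NM)
  have pa: "traces_ham (map d_a g) N (int M, int N - 1) (int N - 1, int M - 1)" using ham_a[OF hg] by (simp add: NM)
  have pg: "traces_ham (map d_g g) N (int M, 0) (int N - 1, int M)" using ham_g[OF hg] by (simp add: NM)
  have px: "traces_ham (map d_x g) N (int M - 1, int N - 1) (0, int M - 1)" using ham_x[OF hg] by (simp add: NM)
  have rm: "traces_ham (rev (map d_m g)) N (int M - 1, 0) (int N - 1, int M - 1)"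
    unfolding rev_eqs(1) using rev_ham[OF py] .
  have ry: "traces_ham (rev (map d_y g)) N (int M, int N - 1) (0, int M)"
    unfolding rev_eqs(2) using rev_ham[OF pm] .
  have rg: "traces_ham (rev (map d_g g)) N (0, int M - 1) (int M - 1, int N - 1)"
    unfolding rev_eqs(3) using rev_ham[OF px] .
  have ro: "traces_ham (rev (map d_o g)) N (int N - 1, int M - 1) (int M, int N - 1)"
    unfolding rev_eqs(4) using rev_ham[OF pa] .
  have ra: "traces_ham (rev (map d_a g)) N (0, int M) (int M - 1, 0)"
    unfolding rev_eqs(5) using rev_ham[OF po] .
  have r0: "traces_ham (rev g) N (int M - 1, int N - 1) (int N - 1, int M)"
    using rev_ham[OF pf] by (simp add: map_map flip: comp_eqs(6))
  have hg': "traces_ham g N (0, int M - 1) (int M, 0)" by (rule hg)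
  have 6: "traces_ham (h6 n) (2*N) (int N - 1, int M) (0 + int N, int M)"
    unfolding h6_def Let_def g_def[symmetric] by (rule quad[OF pf rm hg ry])
  have 7: "traces_ham (h7 n) (2*N) (int N - 1, int M) (int N - 1 + int N, int M - 1)"
    unfolding h7_def Let_def g_def[symmetric] by (rule quad[OF pf rm hg pa])
  have 8: "traces_ham (h8 n) (2*N) (0, int M - 1) (int N - 1 + int N, int M - 1)"
    unfolding h8_def Let_def g_def[symmetric] by (rule quad[OF rg rm hg pa])
  have 9: "traces_ham (h9 n) (2*N) (int N - 1, int M - 1) (0 + int N, int M - 1)"
    unfolding h9_def Let_def g_def[symmetric] by (rule quad[OF ro pg ra px])
  have 10: "traces_ham (h10 n) (2*N) (0, int M) (int N - 1 + int N, int M)"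
    unfolding h10_def Let_def g_def[symmetric] by (rule quad[OF pm pg ra r0])
  have 11: "traces_ham (h11 n) (2*N) (0, int M) (0 + int N, int M - 1)"
    unfolding h11_def Let_def g_def[symmetric] by (rule quad[OF pm pg ra px])
  show ?thesis using 6 7 8 9 10 11 unfolding nN LgN MgM
    by (simp add: adjacent_def algebra_simps)
qed


end
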